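(* Let $\nu$ be a modulus of variation and $1\le p<\infty$. If $f\in V_p[\nu]$ is $2\pi$-periodic, then there is a constant $C$ (depending on $f$) such that its Fourier coefficients satisfy $|\hat f(n)|\le C\,\nu(n)/n^{1/p}$ for all $n\ge1$.
   Context: A modulus of variation is a nondecreasing concave sequence of positive numbers $\nu(1),\nu(2),\dots$. For $f$ and $n\ge1$, $\upsilon_p(n,f)=\sup(\sum_{j=1}^n|f(I_j)|^p)^{1/p}$ over $n$ nonoverlapping subintervals $I_j$ of $[0,2\pi]$, $f(I)=f(\sup I)-f(\inf I)$; $V_p[\nu]$ is the class of bounded $2\pi$-periodic $f$ with $\upsilon_p(n,f)\le C\nu(n)$ for all $n$ and some $C$. *)

theory Defs
  imports "HOL-Analysis.Analysis"
begin

definition modulus_of_variation :: "(nat \<Rightarrow> real) \<Rightarrow> bool" where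
  "modulus_of_variation \<nu> \<longleftrightarrow>
     (\<forall>n\<ge>1. 0 < \<nu> n) \<and>
     (\<forall>n\<ge>1. \<nu> n \<le> \<nu> (n + 1)) \<and>
     (\<forall>n\<ge>2. \<nu> (n - 1) + \<nu> (n + 1) \<le> 2 * \<nu> n)"

definition nonoverlapping_subintervals :: "nat \<Rightarrow> (nat \<Rightarrow> real) \<Rightarrow> (nat \<Rightarrow> real) \<Rightarrow> bool" where
  "nonoverlapping_subintervals n a b \<longleftrightarrow>
     (\<forall>j<n. 0 \<le> a j \<and> a j \<le> b j \<and> b j \<le> 2 * pi) \<and>
     (\<forall>i<n. \<forall>j<n. i \<noteq> j \<longrightarrow> b i \<le> a j \<or> b j \<le> a i)"

definition upsilon :: "real \<Rightarrow> nat \<Rightarrow> (real \<Rightarrow> complex) \<Rightarrow> ereal" where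
  "upsilon p n f = (SUP (a, b) \<in> {(a, b). nonoverlapping_subintervals n a b}.
       ereal ((\<Sum>j<n. cmod (f (b j) - f (a j)) powr p) powr (1 / p)))"

definition Vp_class :: "real \<Rightarrow> (nat \<Rightarrow> real) \<Rightarrow> (real \<Rightarrow> complex) set" where
  "Vp_class p \<nu> = {f. bounded (range f) \<and> (\<forall>x. f (x + 2 * pi) = f x) \<and>
       (\<exists>C. \<forall>n\<ge>1. upsilon p n f \<le> ereal (C * \<nu> n))}"

definition fourier_coeff :: "(real \<Rightarrow> complex) \<Rightarrow> int \<Rightarrow> complex" where
  "fourier_coeff f n = complex_of_real (1 / (2 * pi)) *
     (LINT x:{0..2 * pi}|lborel. f x * exp (- \<i> * of_int n * complex_of_real x))"

end

theory Submission
  imports Defs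
begin

lemma power_mean_pos:
  fixes d :: "nat \<Rightarrow> real"
  assumes "finite J" "J \<noteq> {}" "p \<ge> 1" "\<And>j. j \<in> J \<Longrightarrow> d j > 0"
  shows "(\<Sum>j\<in>J. d j) \<le> real (card J) powr (1 - 1/p) * (\<Sum>j\<in>J. d j powr p) powr (1/p)"
proof -
  define m where "m = real (card J)"
  have m0: "m > 0" using assms m_def by (simp add: card_gt_0_iff)
  have "((\<Sum>j\<in>J. (1/m) *\<^sub>R d j)) powr p \<le> (\<Sum>j\<in>J. (1/m) * (d j powr p))"
    apply (rule convex_on_sum[OF assms(1,2) powr_convex[OF assms(3)]])
    using m0 assms by (auto simp: m_def)
  hence "((\<Sum>j\<in>J. d j) / m) powr p \<le> (\<Sum>j\<in>J. d j powr p) / m"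
    by (simp add: sum_distrib_left[symmetric] sum_divide_distrib[symmetric])
  hence "(((\<Sum>j\<in>J. d j) / m) powr p) powr (1/p) \<le> ((\<Sum>j\<in>J. d j powr p) / m) powr (1/p)"
    using assms(3) by (intro powr_mono2) auto
  moreover have "(((\<Sum>j\<in>J. d j) / m) powr p) powr (1/p) = (\<Sum>j\<in>J. d j) / m"
    using assms(3) m0 by (simp add: powr_powr sum_nonneg assms(4) less_imp_le)
  ultimately have "(\<Sum>j\<in>J. d j) \<le> m * ((\<Sum>j\<in>J. d j powr p) / m) powr (1/p)"
    using m0 by (simp add: field_simps)
  also have "\<dots> = m powr (1 - 1/p) * (\<Sum>j\<in>J. d j powr p) powr (1/p)"
  proof -
    have e: "m powr (1/p) * m powr ((p-1)/p) = m"
      using m0 assms(3) by (simp add: powr_add[symmetric] add_divide_distrib[symmetric])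
    show ?thesis
    using m0 assms(3) e
    by (simp add: powr_divide sum_nonneg powr_diff field_simps)
  qed
  finally show ?thesis by (simp add: m_def)
qed

lemma power_mean:
  fixes d :: "nat \<Rightarrow> real"
  assumes "finite J" "p \<ge> 1" "\<And>j. j \<in> J \<Longrightarrow> d j \<ge> 0"
  shows "(\<Sum>j\<in>J. d j) \<le> real (card J) powr (1 - 1/p) * (\<Sum>j\<in>J. d j powr p) powr (1/p)"
proof -
  define J' where "J' = {j\<in>J. d j > 0}"
  have fin: "finite J'" using assms(1) J'_def by auto
  have s1: "(\<Sum>j\<in>J. d j) = (\<Sum>j\<in>J'. d j)"
    unfolding J'_def using assms by (intro sum.mono_neutral_right) force+
  have s2: "(\<Sum>j\<in>J. d j powr p) = (\<Sum>j\<in>J'. d j powr p)"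
    unfolding J'_def using assms by (intro sum.mono_neutral_right) force+
  show ?thesis
  proof (cases "J' = {}")
    case True
    then show ?thesis using s1 by simp
  next
    case False
    have "(\<Sum>j\<in>J'. d j) \<le> real (card J') powr (1 - 1/p) * (\<Sum>j\<in>J'. d j powr p) powr (1/p)"
      using power_mean_pos[OF fin False assms(2)] J'_def by auto
    also have "\<dots> \<le> real (card J) powr (1 - 1/p) * (\<Sum>j\<in>J'. d j powr p) powr (1/p)"
    proof (rule mult_right_mono)
      have "card J' \<le> card J" using assms(1) J'_def by (intro card_mono) auto
      moreover have "card J' > 0" using False fin by (simp add: card_gt_0_iff)
      ultimately show "real (card J') powr (1 - 1/p) \<le> real (card J) powr (1 - 1/p)"
        using assms(2) by (intro powr_mono2) auto
    qed simp
    finally show ?thesis using s1 s2 by simp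
  qed
qed

lemma integral_split_sum:
  fixes g :: "real \<Rightarrow> complex"
  assumes "h \<ge> 0" "g integrable_on {a..a + real m * h}"
  shows "integral {a..a + real m * h} g = (\<Sum>k<m. integral {a + real k * h..a + real k * h + h} g)"
  using assms(2)
proof (induction m)
  case 0
  then show ?case by simp
next
  case (Suc m)
  have i1: "g integrable_on {a..a + real m * h}"
    by (rule integrable_subinterval_real[OF Suc.prems]) (use assms(1) in \<open>auto intro: mult_right_mono\<close>)
  have "integral {a..a + real m * h} g + integral {a + real m * h..a + real (Suc m) * h} g
        = integral {a..a + real (Suc m) * h} g"
    by (rule Henstock_Kurzweil_Integration.integral_combine[OF _ _ Suc.prems]) (use assms(1) in \<open>auto simp: algebra_simps\<close>)
  then show ?case using Suc.IH[OF i1] by (simp add: algebra_simps)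
qed

lemma pair_sum:
  fixes F :: "nat \<Rightarrow> complex"
  shows "(\<Sum>k<2*n. (-1)^k * F k) = (\<Sum>j<n. F (2*j) - F (2*j+1))"
  by (induction n) (auto simp: algebra_simps)

theorem proposition7p6:
  fixes \<nu> :: "nat \<Rightarrow> real" and p :: real and f :: "real \<Rightarrow> complex"
  assumes "modulus_of_variation \<nu>"
    and "1 \<le> p"
    and "f \<in> Vp_class p \<nu>"
    and "\<forall>x. f (x + 2 * pi) = f x"
  shows "\<exists>C. \<forall>n::nat. n \<ge> 1 \<longrightarrow>
           cmod (fourier_coeff f (int n)) \<le> C * \<nu> n / real n powr (1 / p)"
proof -
  obtain C0 where C0: "\<And>n. n \<ge> 1 \<Longrightarrow> upsilon p n f \<le> ereal (C0 * \<nu> n)"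
    using assms(3) unfolding Vp_class_def by auto
  have nupos: "\<And>n. n \<ge> 1 \<Longrightarrow> \<nu> n > 0" using assms(1) unfolding modulus_of_variation_def by auto
  define C where "C = max C0 0"
  have C0': "\<And>n. n \<ge> 1 \<Longrightarrow> upsilon p n f \<le> ereal (C * \<nu> n)"
  proof -
    fix n :: nat assume n: "n \<ge> 1"
    have "C0 * \<nu> n \<le> C * \<nu> n" using nupos[OF n] unfolding C_def by (intro mult_right_mono) auto
    then show "upsilon p n f \<le> ereal (C * \<nu> n)" using C0[OF n] by (meson ereal_less_eq(3) order_trans)
  qed
  have Cnn: "C \<ge> 0" unfolding C_def by simp
  show ?thesis
  proof (intro exI allI impI)
    fix n :: nat assume n: "n \<ge> 1"
    have nu: "\<nu> n > 0" using nupos[OF n] .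
    have rhs0: "0 \<le> C * \<nu> n / real n powr (1 / p)" using Cnn nu by simp
    define g where "g x = f x * exp (- \<i> * of_int (int n) * complex_of_real x)" for x
    define h where "h = pi / real n"
    have hpos: "h > 0" using n unfolding h_def by simp
    have nh: "real n * h = pi" using n unfolding h_def by simp
    have fc: "fourier_coeff f (int n) = complex_of_real (1 / (2 * pi)) * (LINT x:{0..2 * pi}|lborel. g x)"
      unfolding fourier_coeff_def g_def by simp
    show "cmod (fourier_coeff f (int n)) \<le> C * \<nu> n / real n powr (1 / p)"
    proof (cases "set_integrable lborel {0..2 * pi} g")
      case False
      then have "(LINT x:{0..2 * pi}|lborel. g x) = 0"
        unfolding set_lebesgue_integral_def set_integrable_def by (simp add: not_integrable_integral_eq)
      then show ?thesis using fc rhs0 by simp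
    next
      case True
      have gi: "g integrable_on {0..2*pi}" and geq: "(LINT x:{0..2 * pi}|lborel. g x) = integral {0..2*pi} g"
        using set_borel_integral_eq_integral[OF True] by auto
      define B where "B = real n powr (1 - 1/p) * (C * \<nu> n)"
      have B0: "B \<ge> 0" unfolding B_def using Cnn nu by simp
      have ptw: "norm (\<Sum>k<2*n. g (t + real k * h)) \<le> B" if t: "t \<in> {0..h}" for t
      proof -
        have gk: "g (t + real k * h) = exp (- \<i> * of_int (int n) * complex_of_real t) * ((-1)^k * f (t + real k * h))" for k
        proof -
          have "exp (- \<i> * of_int (int n) * complex_of_real (t + real k * h))
              = exp (- \<i> * of_int (int n) * complex_of_real t) * exp (of_nat k * (- (\<i> * of_real pi)))"
          proof -
            have c: "complex_of_nat n * complex_of_real h = complex_of_real pi"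
              using nh by (metis of_real_mult of_real_of_nat_eq)
            show ?thesis by (simp add: exp_add[symmetric] algebra_simps c)
          qed
          also have "exp (of_nat k * (- (\<i> * of_real pi))) = (-1)^k"
            by (simp add: exp_of_nat_mult exp_minus power_inverse[symmetric])
          finally show ?thesis unfolding g_def by simp
        qed
        define a where "a j = t + real (2*j) * h" for j
        define b where "b j = t + real (2*j+1) * h" for j
        have "(\<Sum>k<2*n. g (t + real k * h)) = exp (- \<i> * of_int (int n) * complex_of_real t) * (\<Sum>j<n. f (a j) - f (b j))"
          unfolding gk sum_distrib_left[symmetric] pair_sum a_def b_def by simp
        then have "norm (\<Sum>k<2*n. g (t + real k * h)) = norm (\<Sum>j<n. f (a j) - f (b j))"
          by (simp add: norm_mult)
        also have "\<dots> \<le> (\<Sum>j<n. cmod (f (b j) - f (a j)))"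
          by (rule order_trans[OF norm_sum]) (simp add: norm_minus_commute)
        also have "\<dots> \<le> real n powr (1 - 1/p) * (\<Sum>j<n. cmod (f (b j) - f (a j)) powr p) powr (1/p)"
          using power_mean[of "{..<n}" p "\<lambda>j. cmod (f (b j) - f (a j))"] assms(2) by simp
        also have "\<dots> \<le> B"
        proof -
          have no: "nonoverlapping_subintervals n a b"
            unfolding nonoverlapping_subintervals_def
          proof (intro conjI allI impI)
            fix j assume j: "j < n"
            show "0 \<le> a j" using t hpos unfolding a_def by simp
            show "a j \<le> b j" using hpos unfolding a_def b_def by (simp add: algebra_simps)
            have "real (2*j+1) \<le> real (2*n) - 1" using j by simp
            then have "real (2*j+1) * h \<le> (real (2*n) - 1) * h" using hpos by (intro mult_right_mono) auto
            then show "b j \<le> 2 * pi" using t nh unfolding b_def by (simp add: algebra_simps)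
          next
            fix i j assume ij: "i < n" "j < n" "i \<noteq> j"
            show "b i \<le> a j \<or> b j \<le> a i"
            proof (cases "i < j")
              case True
              then have "real (2*i+1) \<le> real (2*j)" by simp
              then have "real (2*i+1) * h \<le> real (2*j) * h" using hpos by (intro mult_right_mono) auto
              then show ?thesis unfolding a_def b_def by simp
            next
              case False
              then have "real (2*j+1) \<le> real (2*i)" using ij by simp
              then have "real (2*j+1) * h \<le> real (2*i) * h" using hpos by (intro mult_right_mono) auto
              then show ?thesis unfolding a_def b_def by simp
            qed
          qed
          have "ereal ((\<Sum>j<n. cmod (f (b j) - f (a j)) powr p) powr (1/p)) \<le> upsilon p n f"
            unfolding upsilon_def using no by (intro SUP_upper2[of "(a, b)"]) auto
          also have "\<dots> \<le> ereal (C * \<nu> n)" using C0'[OF n] .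
          finally have "(\<Sum>j<n. cmod (f (b j) - f (a j)) powr p) powr (1/p) \<le> C * \<nu> n" by simp
          then show ?thesis unfolding B_def by (intro mult_left_mono) auto
        qed
        finally show ?thesis .
      qed
      have shi: "(\<lambda>t. g (t + real k * h)) integrable_on {0..h}" if k: "k < 2*n" for k
      proof -
        have "g integrable_on {real k * h..real k * h + h}"
        proof (rule integrable_subinterval_real[OF gi])
          have "real k * h + h = real (Suc k) * h" by (simp add: algebra_simps)
          also have "\<dots> \<le> real (2*n) * h" using k hpos by (intro mult_right_mono) auto
          also have "\<dots> = 2 * pi" using nh by simp
          finally show "{real k * h..real k * h + h} \<subseteq> {0..2 * pi}" using hpos by auto
        qed
        from integrable_shift_real_ivl[OF this, of "real k * h"] show ?thesis by simp
      qed
      have "integral {0..2*pi} g = integral {0..0 + real (2*n) * h} g"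
        using nh by (simp add: mult.assoc)
      also have "\<dots> = (\<Sum>k<2*n. integral {0 + real k * h..0 + real k * h + h} g)"
        using hpos gi nh by (intro integral_split_sum) (auto simp: mult.assoc)
      also have "\<dots> = (\<Sum>k<2*n. integral {0..h} (\<lambda>t. g (t + real k * h)))"
        by (intro sum.cong refl) (use integral_shift_real_ivl[where f=g and a="real k * h" and b="real k * h + h" and c="real k * h" for k] in simp)
      also have "\<dots> = integral {0..h} (\<lambda>t. \<Sum>k<2*n. g (t + real k * h))"
        using shi by (intro integral_sum[symmetric]) auto
      finally have ieq: "integral {0..2*pi} g = integral {0..h} (\<lambda>t. \<Sum>k<2*n. g (t + real k * h))" .
      have "norm (integral {0..h} (\<lambda>t. \<Sum>k<2*n. g (t + real k * h))) \<le> B * Henstock_Kurzweil_Integration.content (cbox 0 h)"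
        using B0 ptw shi
        by (intro has_integral_bound[of B _ _ 0 h]) (auto intro!: integrable_integral integrable_sum)
      then have bnd: "norm (integral {0..2*pi} g) \<le> B * h" using ieq hpos by simp
      have "cmod (fourier_coeff f (int n)) = norm (integral {0..2*pi} g) / (2 * pi)"
        using fc geq by (simp add: norm_mult norm_divide)
      also have "\<dots> \<le> B * h / (2 * pi)" using bnd by (simp add: divide_right_mono)
      also have "\<dots> = C * \<nu> n / real n powr (1 / p) / 2"
      proof -
        have "real n powr (1 - 1/p) = real n / real n powr (1/p)" using n by (simp add: powr_diff)
        then show ?thesis unfolding B_def h_def using n by (simp add: field_simps)
      qed
      also have "\<dots> \<le> C * \<nu> n / real n powr (1 / p)" using rhs0 by simp
      finally show ?thesis .
    qed
  qed
qed

end
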